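(* In the setting below, suppose there exists $t_0\in(0,1]$ such that both $Z_1(t_0)$ and $Z_2(t_0)$ are tangent to the coordinate axes. Then both $Z_1(t)$ and $Z_2(t)$ stay on the corresponding axes for all $t\in(0,1]$.
   Context: Planar three-body problem with masses $m_1=m_2=m_3=1$, $\chi=\{q=(q_1,q_2,q_3)\in(\mathbb{R}^2)^3: q_1+q_2+q_3=0\}$, action $\mathcal{A}(q)=\int_0^1\big(\tfrac12\sum|\dot q_i|^2+\sum_{i<j}\frac{1}{|q_i-q_j|}\big)dt$. Let $Q_{S_4}=\{q: q_1=q_2=(-a_2,0),\ q_3=(2a_2,0),\ a_2\ge0\}$ and $Q_{E_1}=\{q: q_1=(0,-2b_1),\ q_2=(-b_2,b_1),\ q_3=(b_2,b_1),\ b_1,b_2\in\mathbb{R}\}$. Let $q$ minimize $\mathcal{A}$ over $\{q\in H^1([0,1],\chi): q(0)\in Q_{S_4},\ q(1)\in Q_{E_1}\}$; it is collision-free for $t\in(0,1]$ and there satisfies Newton's equations $\ddot q_i=\sum_{j\ne i}\frac{q_j-q_i}{|q_j-q_i|^3}$. Jacobi coordinates: $Z_1=q_1-q_2$, $Z_2=q_3-\frac{q_1+q_2}{2}$. A vector function $Z$ is tangent to the $x$-axis (resp. $y$-axis) at $t_0$ if $Z_y(t_0)=\dot Z_y(t_0)=0$ (resp. $Z_x(t_0)=\dot Z_x(t_0)=0$); "the corresponding axes" means, for each $i$, the axis to which $Z_i$ is tangent at $t_0$. *)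

theory Defs
  imports "HOL-Analysis.Analysis"
begin

text \<open>Planar positions are points of real \<times> real (Euclidean norm).\<close>

text \<open>H^1([0,1]) path: f is the indefinite integral of a square-integrable
(weak derivative) g on [0,1].\<close>
definition H1_path :: "(real \<Rightarrow> real \<times> real) \<Rightarrow> bool" where
  "H1_path f \<longleftrightarrow> (\<exists>g. g absolutely_integrable_on {0..1} \<and>
       (\<lambda>t. (norm (g t))\<^sup>2) integrable_on {0..1} \<and>
       (\<forall>t\<in>{0..1}. (g has_integral (f t - f 0)) {0..t}))"

definition pot :: "real \<times> real \<Rightarrow> real \<times> real \<Rightarrow> ennreal" where
  "pot x y = (if x = y then \<infinity> else ennreal (1 / dist x y))"

text \<open>Lagrangian action (values in [0,\<infinity>]); the velocities are the derivatives,
which exist a.e. for H^1 paths.\<close>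
definition action ::
  "(real \<Rightarrow> real \<times> real) \<Rightarrow> (real \<Rightarrow> real \<times> real) \<Rightarrow> (real \<Rightarrow> real \<times> real) \<Rightarrow> ennreal" where
  "action q1 q2 q3 =
     (\<integral>\<^sup>+ t\<in>{0..1}.
        (ennreal ((1/2) * ((norm (vector_derivative q1 (at t)))\<^sup>2
                          + (norm (vector_derivative q2 (at t)))\<^sup>2
                          + (norm (vector_derivative q3 (at t)))\<^sup>2))
         + pot (q1 t) (q2 t) + pot (q1 t) (q3 t) + pot (q2 t) (q3 t)) \<partial>lborel)"

definition in_QS4 :: "real \<times> real \<Rightarrow> real \<times> real \<Rightarrow> real \<times> real \<Rightarrow> bool" where
  "in_QS4 x1 x2 x3 \<longleftrightarrow> (\<exists>a2::real. a2 \<ge> 0 \<and> x1 = (-a2, 0) \<and> x2 = (-a2, 0) \<and> x3 = (2*a2, 0))"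

definition in_QE1 :: "real \<times> real \<Rightarrow> real \<times> real \<Rightarrow> real \<times> real \<Rightarrow> bool" where
  "in_QE1 x1 x2 x3 \<longleftrightarrow> (\<exists>b1 b2::real. x1 = (0, -2*b1) \<and> x2 = (-b2, b1) \<and> x3 = (b2, b1))"

definition admissible ::
  "(real \<Rightarrow> real \<times> real) \<Rightarrow> (real \<Rightarrow> real \<times> real) \<Rightarrow> (real \<Rightarrow> real \<times> real) \<Rightarrow> bool" where
  "admissible q1 q2 q3 \<longleftrightarrow>
     H1_path q1 \<and> H1_path q2 \<and> H1_path q3 \<and>
     (\<forall>t\<in>{0..1}. q1 t + q2 t + q3 t = 0) \<and>
     in_QS4 (q1 0) (q2 0) (q3 0) \<and> in_QE1 (q1 1) (q2 1) (q3 1)"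

definition action_minimizer ::
  "(real \<Rightarrow> real \<times> real) \<Rightarrow> (real \<Rightarrow> real \<times> real) \<Rightarrow> (real \<Rightarrow> real \<times> real) \<Rightarrow> bool" where
  "action_minimizer q1 q2 q3 \<longleftrightarrow> admissible q1 q2 q3 \<and>
     (\<forall>p1 p2 p3. admissible p1 p2 p3 \<longrightarrow> action q1 q2 q3 \<le> action p1 p2 p3)"

definition force :: "real \<times> real \<Rightarrow> real \<times> real \<Rightarrow> real \<times> real" where
  "force x y = (1 / (dist y x) ^ 3) *\<^sub>R (y - x)"

definition jacobiZ1 :: "real \<times> real \<Rightarrow> real \<times> real \<Rightarrow> real \<times> real" where
  "jacobiZ1 x1 x2 = x1 - x2"

definition jacobiZ2 :: "real \<times> real \<Rightarrow> real \<times> real \<Rightarrow> real \<times> real \<Rightarrow> real \<times> real" where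
  "jacobiZ2 x1 x2 x3 = x3 - (1/2) *\<^sub>R (x1 + x2)"

text \<open>Axes: True = x-axis, False = y-axis. A point lies on the x-axis iff its
y-coordinate vanishes, and on the y-axis iff its x-coordinate vanishes.\<close>
definition on_axis :: "bool \<Rightarrow> real \<times> real \<Rightarrow> bool" where
  "on_axis ax p \<longleftrightarrow> (if ax then snd p = 0 else fst p = 0)"

definition tangent_to_axis :: "bool \<Rightarrow> (real \<Rightarrow> real \<times> real) \<Rightarrow> real \<Rightarrow> bool" where
  "tangent_to_axis ax Z t0 \<longleftrightarrow>
     on_axis ax (Z t0) \<and> on_axis ax (vector_derivative Z (at t0 within {0..1}))"

end

theory Submission
  imports Defs
begin


lemma real_lip:
  fixes A B x d :: real
  assumes d: "d > 0" "d \<le> A" "d \<le> B" and x: "\<bar>A - B\<bar> \<le> x"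
  shows "x / A^3 + \<bar>1/A^3 - 1/B^3\<bar> * B \<le> 4 / d^3 * x"
proof -
  have A: "A > 0" "B > 0" using d by auto
  have x0: "x \<ge> 0" using x by linarith
  have i1: "1/A^3 \<le> 1/d^3" using d by (simp add: frac_le power_mono)
  have i2: "1/(A^2*B) \<le> 1/d^3"
  proof -
    have "d^2 \<le> A^2" using d by (intro power_mono) auto
    then have "d^2*d \<le> A^2*B" using d by (intro mult_mono) auto
    then have "d^3 \<le> A^2*B" by (simp add: power2_eq_square power3_eq_cube)
    then show ?thesis using d A by (simp add: frac_le)
  qed
  have i3: "1/(A*B^2) \<le> 1/d^3"
  proof -
    have "d^2 \<le> B^2" using d by (intro power_mono) auto
    then have "d*d^2 \<le> A*B^2" using d by (intro mult_mono) auto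
    then have "d^3 \<le> A*B^2" by (simp add: power2_eq_square power3_eq_cube)
    then show ?thesis using d A by (simp add: frac_le)
  qed
  have eq: "\<bar>1/A^3 - 1/B^3\<bar> * B = \<bar>A - B\<bar> * (1/A^3 + 1/(A^2*B) + 1/(A*B^2))"
  proof -
    have "1/A^3 - 1/B^3 = (B - A) * (1/A^3 + 1/(A^2*B) + 1/(A*B^2)) / B"
      using A by (simp add: field_simps power2_eq_square power3_eq_cube)
    then have "\<bar>1/A^3 - 1/B^3\<bar> * B = \<bar>B - A\<bar> * (1/A^3 + 1/(A^2*B) + 1/(A*B^2))"
      using A by (simp add: abs_mult abs_divide)
    then show ?thesis by (simp add: abs_minus_commute)
  qed
  have s0: "0 \<le> 1/A^3 + 1/(A^2*B) + 1/(A*B^2)" using A by simp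
  have "\<bar>A - B\<bar> * (1/A^3 + 1/(A^2*B) + 1/(A*B^2)) \<le> x * (3/d^3)"
    using mult_mono[OF x, of "1/A^3 + 1/(A^2*B) + 1/(A*B^2)" "3/d^3"] i1 i2 i3 s0 x0 by linarith
  moreover have "x / A^3 \<le> x / d^3" using i1 x0 by (metis divide_inverse mult_left_mono inverse_eq_divide)
  moreover have "4/d^3*x = x/d^3 + x*(3/d^3)" by (simp add: field_simps)
  ultimately show ?thesis using eq by linarith
qed

lemma glip:
  fixes a b :: "'a::real_normed_vector"
  assumes "d > 0" "d \<le> norm a" "d \<le> norm b"
  shows "norm ((1/norm a^3) *\<^sub>R a - (1/norm b^3) *\<^sub>R b) \<le> 4/d^3 * norm (a - b)"
proof -
  have "(1/norm a^3) *\<^sub>R a - (1/norm b^3) *\<^sub>R b = (1/norm a^3) *\<^sub>R (a - b) + (1/norm a^3 - 1/norm b^3) *\<^sub>R b"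
    by (simp add: algebra_simps)
  then have "norm ((1/norm a^3) *\<^sub>R a - (1/norm b^3) *\<^sub>R b) \<le> norm (a-b) / norm a^3 + \<bar>1/norm a^3 - 1/norm b^3\<bar> * norm b"
    using norm_triangle_ineq[of "(1/norm a^3) *\<^sub>R (a - b)" "(1/norm a^3 - 1/norm b^3) *\<^sub>R b"]
    by (simp add: divide_inverse mult.commute)
  also have "\<dots> \<le> 4/d^3 * norm (a - b)"
    by (rule real_lip) (use assms norm_triangle_ineq3[of a b] in auto)
  finally show ?thesis .
qed

lemma gronwall0:
  fixes E E' :: "real \<Rightarrow> real"
  assumes ab: "a \<le> b" and t0: "t0 \<in> {a..b}"
    and der: "\<forall>t\<in>{a..b}. (E has_real_derivative E' t) (at t within {a..b})"
    and nn: "\<forall>t\<in>{a..b}. 0 \<le> E t"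
    and up: "\<forall>t\<in>{a..b}. E' t \<le> C * E t"
    and lo: "\<forall>t\<in>{a..b}. -(C * E t) \<le> E' t"
    and z: "E t0 = 0"
  shows "\<forall>t\<in>{a..b}. E t = 0"
proof
  fix t assume t: "t \<in> {a..b}"
  have derat: "(E has_real_derivative E' s) (at s)" if "a < s" "s < b" for s
  proof -
    have i: "s \<in> interior {a..b}" using that by simp
    have "(E has_real_derivative E' s) (at s within {a..b})" using der that by auto
    then show ?thesis unfolding at_within_interior[OF i] .
  qed
  have cont: "continuous_on {a..b} E"
    using der by (metis continuous_on_eq_continuous_within DERIV_continuous)
  show "E t = 0"
  proof (cases "t0 \<le> t")
    case True
    define h where "h s = - (E s * exp (- C * s))" for s
    have "h t0 \<le> h t"
    proof (rule DERIV_nonneg_imp_increasing_open[OF True])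
      fix s assume s: "t0 < s" "s < t"
      then have sab: "a < s" "s < b" using t0 t by auto
      have "(h has_real_derivative - (E' s * exp (- C * s) + E s * (exp (- C * s) * (- C)))) (at s)"
        unfolding h_def using derat[OF sab] by (auto intro!: derivative_eq_intros simp: algebra_simps)
      moreover have "0 \<le> - (E' s * exp (- C * s) + E s * (exp (- C * s) * (- C)))"
      proof -
        have "E' s - C * E s \<le> 0" using up sab by auto
        then have "(E' s - C * E s) * exp (- C * s) \<le> 0" by (simp add: mult_nonpos_nonneg)
        then show ?thesis by (simp add: algebra_simps)
      qed
      ultimately show "\<exists>y. (h has_real_derivative y) (at s) \<and> 0 \<le> y" by blast
    next
      show "continuous_on {t0..t} h" unfolding h_def
        using t0 t by (intro continuous_intros continuous_on_subset[OF cont]) auto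
    qed
    then have "E t * exp (- C * t) \<le> 0" using z by (simp add: h_def)
    then have "E t \<le> 0" by (simp add: mult_le_0_iff)
    then show ?thesis using nn t by force
  next
    case False
    then have le: "t \<le> t0" by simp
    define h where "h s = E s * exp (C * s)" for s
    have "h t \<le> h t0"
    proof (rule DERIV_nonneg_imp_increasing_open[OF le])
      fix s assume s: "t < s" "s < t0"
      then have sab: "a < s" "s < b" using t0 t by auto
      have "(h has_real_derivative (E' s * exp (C * s) + E s * (exp (C * s) * C))) (at s)"
        unfolding h_def using derat[OF sab] by (auto intro!: derivative_eq_intros simp: algebra_simps)
      moreover have "0 \<le> (E' s * exp (C * s) + E s * (exp (C * s) * C))"
      proof -
        have "- (C * E s) \<le> E' s" using lo sab by auto
        then have "0 \<le> E' s + C * E s" by linarith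
        then have "0 \<le> (E' s + C * E s) * exp (C * s)" by simp
        then show ?thesis by (simp add: algebra_simps)
      qed
      ultimately show "\<exists>y. (h has_real_derivative y) (at s) \<and> 0 \<le> y" by blast
    next
      show "continuous_on {t..t0} h" unfolding h_def
        using t0 t by (intro continuous_intros continuous_on_subset[OF cont]) auto
    qed
    then have "E t * exp (C * t) \<le> 0" using z by (simp add: h_def)
    then have "E t \<le> 0" by (simp add: mult_le_0_iff)
    then show ?thesis using nn t by force
  qed
qed

lemma sq_deriv:
  fixes f :: "real \<Rightarrow> 'a::real_inner"
  assumes "(f has_vector_derivative f') (at t within S)"
  shows "((\<lambda>t. inner (f t) (f t)) has_real_derivative 2 * inner (f t) f') (at t within S)"
proof -
  have "((\<lambda>t. inner (f t) (f t)) has_vector_derivative (inner (f t) f' + inner f' (f t))) (at t within S)"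
    by (rule bounded_bilinear.has_vector_derivative[OF bounded_bilinear_inner assms assms])
  then show ?thesis unfolding has_real_derivative_iff_has_vector_derivative
    by (simp add: inner_commute)
qed

lemma arith6:
  fixes n1 n2 n3 m1 m2 m3 g1 g2 g3 K :: real
  assumes "0 \<le> n1" "0 \<le> n2" "0 \<le> n3" "0 \<le> m1" "0 \<le> m2" "0 \<le> m3" "0 \<le> K"
    and g1: "g1 \<le> K*(2*n1+n2+n3)" and g2: "g2 \<le> K*(2*n2+n1+n3)" and g3: "g3 \<le> K*(2*n3+n1+n2)"
  shows "2*n1*m1+2*n2*m2+2*n3*m3 + 2*m1*g1+2*m2*g2+2*m3*g3 \<le> (1+4*K)*(n1^2+n2^2+n3^2+m1^2+m2^2+m3^2)"
proof -
  have sq: "2*x*y \<le> x^2+y^2" for x y :: real using sum_squares_bound[of x y] by (simp add: power2_eq_square)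
  have h1: "2*m1*g1 \<le> K*(4*m1^2+2*n1^2+n2^2+n3^2)"
  proof -
    have "2*m1*g1 \<le> 2*m1*(K*(2*n1+n2+n3))" using g1 assms by (simp add: mult_left_mono)
    also have "\<dots> = K*(2*(2*m1*n1) + 2*m1*n2 + 2*m1*n3)" by (simp add: algebra_simps)
    also have "\<dots> \<le> K*(2*(m1^2+n1^2) + (m1^2+n2^2) + (m1^2+n3^2))"
      using sq[of m1 n1] sq[of m1 n2] sq[of m1 n3] assms by (intro mult_left_mono) auto
    finally show ?thesis by (simp add: algebra_simps)
  qed
  have h2: "2*m2*g2 \<le> K*(4*m2^2+2*n2^2+n1^2+n3^2)"
  proof -
    have "2*m2*g2 \<le> 2*m2*(K*(2*n2+n1+n3))" using g2 assms by (simp add: mult_left_mono)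
    also have "\<dots> = K*(2*(2*m2*n2) + 2*m2*n1 + 2*m2*n3)" by (simp add: algebra_simps)
    also have "\<dots> \<le> K*(2*(m2^2+n2^2) + (m2^2+n1^2) + (m2^2+n3^2))"
      using sq[of m2 n2] sq[of m2 n1] sq[of m2 n3] assms by (intro mult_left_mono) auto
    finally show ?thesis by (simp add: algebra_simps)
  qed
  have h3: "2*m3*g3 \<le> K*(4*m3^2+2*n3^2+n1^2+n2^2)"
  proof -
    have "2*m3*g3 \<le> 2*m3*(K*(2*n3+n1+n2))" using g3 assms by (simp add: mult_left_mono)
    also have "\<dots> = K*(2*(2*m3*n3) + 2*m3*n1 + 2*m3*n2)" by (simp add: algebra_simps)
    also have "\<dots> \<le> K*(2*(m3^2+n3^2) + (m3^2+n1^2) + (m3^2+n2^2))"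
      using sq[of m3 n3] sq[of m3 n1] sq[of m3 n2] assms by (intro mult_left_mono) auto
    finally show ?thesis by (simp add: algebra_simps)
  qed
  have "2*n1*m1+2*n2*m2+2*n3*m3 \<le> n1^2+n2^2+n3^2+m1^2+m2^2+m3^2"
    using sq[of n1 m1] sq[of n2 m2] sq[of n3 m3] by linarith
  moreover have "(1+4*K)*(n1^2+n2^2+n3^2+m1^2+m2^2+m3^2) = (n1^2+n2^2+n3^2+m1^2+m2^2+m3^2)
     + K*(4*m1^2+2*n1^2+n2^2+n3^2) + K*(4*m2^2+2*n2^2+n1^2+n3^2) + K*(4*m3^2+2*n3^2+n1^2+n2^2)"
    by (simp add: algebra_simps)
  ultimately show ?thesis using h1 h2 h3 by linarith
qed

lemma force_lip:
  assumes "d > 0" "d \<le> dist x y" "d \<le> dist x' y'"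
  shows "norm (force x y - force x' y') \<le> 4/d^3 * (norm (x - x') + norm (y - y'))"
proof -
  have "norm (force x y - force x' y') \<le> 4/d^3 * norm ((y - x) - (y' - x'))"
    unfolding force_def dist_norm
    by (rule glip) (use assms in \<open>auto simp: dist_norm norm_minus_commute\<close>)
  also have "norm ((y - x) - (y' - x')) \<le> norm (x - x') + norm (y - y')"
    using norm_triangle_ineq4[of "y - y'" "x - x'"] by (simp add: algebra_simps)
  then have "4/d^3 * norm ((y - x) - (y' - x')) \<le> 4/d^3 * (norm (x - x') + norm (y - y'))"
    using assms by (intro mult_left_mono) auto
  finally show ?thesis .
qed

lemma uniq3:
  fixes q1 q2 q3 v1 v2 v3 p1 p2 p3 w1 w2 w3 :: "real \<Rightarrow> real \<times> real"
  assumes ab: "a \<le> b" and t0: "t0 \<in> {a..b}" and d: "d > 0"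
    and dq: "\<forall>t\<in>{a..b}. (q1 has_vector_derivative v1 t) (at t within {a..b})
        \<and> (q2 has_vector_derivative v2 t) (at t within {a..b})
        \<and> (q3 has_vector_derivative v3 t) (at t within {a..b})
        \<and> (v1 has_vector_derivative (force (q1 t) (q2 t) + force (q1 t) (q3 t))) (at t within {a..b})
        \<and> (v2 has_vector_derivative (force (q2 t) (q1 t) + force (q2 t) (q3 t))) (at t within {a..b})
        \<and> (v3 has_vector_derivative (force (q3 t) (q1 t) + force (q3 t) (q2 t))) (at t within {a..b})"
    and dp: "\<forall>t\<in>{a..b}. (p1 has_vector_derivative w1 t) (at t within {a..b})
        \<and> (p2 has_vector_derivative w2 t) (at t within {a..b})
        \<and> (p3 has_vector_derivative w3 t) (at t within {a..b})
        \<and> (w1 has_vector_derivative (force (p1 t) (p2 t) + force (p1 t) (p3 t))) (at t within {a..b})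
        \<and> (w2 has_vector_derivative (force (p2 t) (p1 t) + force (p2 t) (p3 t))) (at t within {a..b})
        \<and> (w3 has_vector_derivative (force (p3 t) (p1 t) + force (p3 t) (p2 t))) (at t within {a..b})"
    and sq: "\<forall>t\<in>{a..b}. d \<le> dist (q1 t) (q2 t) \<and> d \<le> dist (q1 t) (q3 t) \<and> d \<le> dist (q2 t) (q3 t)"
    and sp: "\<forall>t\<in>{a..b}. d \<le> dist (p1 t) (p2 t) \<and> d \<le> dist (p1 t) (p3 t) \<and> d \<le> dist (p2 t) (p3 t)"
    and init: "p1 t0 = q1 t0" "p2 t0 = q2 t0" "p3 t0 = q3 t0"
              "w1 t0 = v1 t0" "w2 t0 = v2 t0" "w3 t0 = v3 t0"
  shows "\<forall>t\<in>{a..b}. p1 t = q1 t \<and> p2 t = q2 t \<and> p3 t = q3 t"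
proof -
  define K :: real where "K = 4/d^3"
  have K0: "0 \<le> K" using d by (simp add: K_def)
  define G1 where "G1 t = (force (p1 t) (p2 t) + force (p1 t) (p3 t)) - (force (q1 t) (q2 t) + force (q1 t) (q3 t))" for t
  define G2 where "G2 t = (force (p2 t) (p1 t) + force (p2 t) (p3 t)) - (force (q2 t) (q1 t) + force (q2 t) (q3 t))" for t
  define G3 where "G3 t = (force (p3 t) (p1 t) + force (p3 t) (p2 t)) - (force (q3 t) (q1 t) + force (q3 t) (q2 t))" for t
  define E where "E t = inner (p1 t - q1 t) (p1 t - q1 t) + inner (p2 t - q2 t) (p2 t - q2 t)
     + inner (p3 t - q3 t) (p3 t - q3 t) + inner (w1 t - v1 t) (w1 t - v1 t)
     + inner (w2 t - v2 t) (w2 t - v2 t) + inner (w3 t - v3 t) (w3 t - v3 t)" for t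
  define E' where "E' t = 2 * inner (p1 t - q1 t) (w1 t - v1 t) + 2 * inner (p2 t - q2 t) (w2 t - v2 t)
     + 2 * inner (p3 t - q3 t) (w3 t - v3 t) + 2 * inner (w1 t - v1 t) (G1 t)
     + 2 * inner (w2 t - v2 t) (G2 t) + 2 * inner (w3 t - v3 t) (G3 t)" for t
  have der: "\<forall>t\<in>{a..b}. (E has_real_derivative E' t) (at t within {a..b})"
  proof
    fix t assume t: "t \<in> {a..b}"
    note q = dq[rule_format, OF t] and p = dp[rule_format, OF t]
    have a1: "((\<lambda>t. p1 t - q1 t) has_vector_derivative (w1 t - v1 t)) (at t within {a..b})"
      using p q by (intro has_vector_derivative_diff) auto
    have a2: "((\<lambda>t. p2 t - q2 t) has_vector_derivative (w2 t - v2 t)) (at t within {a..b})"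
      using p q by (intro has_vector_derivative_diff) auto
    have a3: "((\<lambda>t. p3 t - q3 t) has_vector_derivative (w3 t - v3 t)) (at t within {a..b})"
      using p q by (intro has_vector_derivative_diff) auto
    have b1: "((\<lambda>t. w1 t - v1 t) has_vector_derivative G1 t) (at t within {a..b})"
      unfolding G1_def using p q by (intro has_vector_derivative_diff) auto
    have b2: "((\<lambda>t. w2 t - v2 t) has_vector_derivative G2 t) (at t within {a..b})"
      unfolding G2_def using p q by (intro has_vector_derivative_diff) auto
    have b3: "((\<lambda>t. w3 t - v3 t) has_vector_derivative G3 t) (at t within {a..b})"
      unfolding G3_def using p q by (intro has_vector_derivative_diff) auto
    show "(E has_real_derivative E' t) (at t within {a..b})"
      unfolding E_def E'_def
      by (intro DERIV_add sq_deriv a1 a2 a3 b1 b2 b3)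
  qed
  have nn: "\<forall>t\<in>{a..b}. 0 \<le> E t" unfolding E_def by simp
  have bnd: "\<bar>E' t\<bar> \<le> (1+4*K) * E t" if t: "t \<in> {a..b}" for t
  proof -
    note sqt = sq[rule_format, OF t] and spt = sp[rule_format, OF t]
    define n1 where "n1 = norm (p1 t - q1 t)"
    define n2 where "n2 = norm (p2 t - q2 t)"
    define n3 where "n3 = norm (p3 t - q3 t)"
    define m1 where "m1 = norm (w1 t - v1 t)"
    define m2 where "m2 = norm (w2 t - v2 t)"
    define m3 where "m3 = norm (w3 t - v3 t)"
    have fl: "norm (force (p i) (p j) - force (q i) (q j)) \<le> K * (norm (p i - q i) + norm (p j - q j))"
      if "d \<le> dist (p i) (p j)" "d \<le> dist (q i) (q j)" for p q :: "nat \<Rightarrow> real \<times> real" and i j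
      unfolding K_def using force_lip[OF d that] .
    have g1: "norm (G1 t) \<le> K*(2*n1+n2+n3)"
    proof -
      have "norm (G1 t) \<le> norm (force (p1 t) (p2 t) - force (q1 t) (q2 t)) + norm (force (p1 t) (p3 t) - force (q1 t) (q3 t))"
        unfolding G1_def by (rule order_trans[OF _ norm_triangle_ineq]) (simp add: algebra_simps)
      also have "\<dots> \<le> K * (n1 + n2) + K * (n1 + n3)"
        using force_lip[OF d, of "p1 t" "p2 t" "q1 t" "q2 t"] force_lip[OF d, of "p1 t" "p3 t" "q1 t" "q3 t"] sqt spt
        unfolding K_def n1_def n2_def n3_def by (intro add_mono) auto
      finally show ?thesis by (simp add: algebra_simps)
    qed
    have g2: "norm (G2 t) \<le> K*(2*n2+n1+n3)"
    proof -
      have "norm (G2 t) \<le> norm (force (p2 t) (p1 t) - force (q2 t) (q1 t)) + norm (force (p2 t) (p3 t) - force (q2 t) (q3 t))"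
        unfolding G2_def by (rule order_trans[OF _ norm_triangle_ineq]) (simp add: algebra_simps)
      also have "\<dots> \<le> K * (n2 + n1) + K * (n2 + n3)"
        using force_lip[OF d, of "p2 t" "p1 t" "q2 t" "q1 t"] force_lip[OF d, of "p2 t" "p3 t" "q2 t" "q3 t"] sqt spt
        unfolding K_def n1_def n2_def n3_def by (intro add_mono) (auto simp: dist_commute)
      finally show ?thesis by (simp add: algebra_simps)
    qed
    have g3: "norm (G3 t) \<le> K*(2*n3+n1+n2)"
    proof -
      have "norm (G3 t) \<le> norm (force (p3 t) (p1 t) - force (q3 t) (q1 t)) + norm (force (p3 t) (p2 t) - force (q3 t) (q2 t))"
        unfolding G3_def by (rule order_trans[OF _ norm_triangle_ineq]) (simp add: algebra_simps)
      also have "\<dots> \<le> K * (n3 + n1) + K * (n3 + n2)"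
        using force_lip[OF d, of "p3 t" "p1 t" "q3 t" "q1 t"] force_lip[OF d, of "p3 t" "p2 t" "q3 t" "q2 t"] sqt spt
        unfolding K_def n1_def n2_def n3_def by (intro add_mono) (auto simp: dist_commute)
      finally show ?thesis by (simp add: algebra_simps)
    qed
    have cs: "\<bar>inner x y\<bar> \<le> norm x * norm y" for x y :: "real \<times> real" by (rule Cauchy_Schwarz_ineq2)
    have "\<bar>E' t\<bar> \<le> 2*n1*m1+2*n2*m2+2*n3*m3 + 2*m1*norm (G1 t)+2*m2*norm (G2 t)+2*m3*norm (G3 t)"
      unfolding E'_def n1_def n2_def n3_def m1_def m2_def m3_def
      using cs[of "p1 t - q1 t" "w1 t - v1 t"] cs[of "p2 t - q2 t" "w2 t - v2 t"] cs[of "p3 t - q3 t" "w3 t - v3 t"]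
        cs[of "w1 t - v1 t" "G1 t"] cs[of "w2 t - v2 t" "G2 t"] cs[of "w3 t - v3 t" "G3 t"]
      by linarith
    also have "\<dots> \<le> (1+4*K)*(n1^2+n2^2+n3^2+m1^2+m2^2+m3^2)"
      by (rule arith6) (use g1 g2 g3 K0 in \<open>auto simp: n1_def n2_def n3_def m1_def m2_def m3_def\<close>)
    also have "\<dots> = (1+4*K) * E t"
      unfolding E_def n1_def n2_def n3_def m1_def m2_def m3_def by (simp add: power2_norm_eq_inner)
    finally show ?thesis .
  qed
  have "\<forall>t\<in>{a..b}. E t = 0"
  proof (rule gronwall0[OF ab t0 der nn])
    show "\<forall>t\<in>{a..b}. E' t \<le> (1+4*K) * E t" using bnd by (meson abs_le_D1)
    show "\<forall>t\<in>{a..b}. - ((1+4*K) * E t) \<le> E' t" using bnd by (meson abs_le_D2 minus_le_iff)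
    show "E t0 = 0" unfolding E_def using init by simp
  qed
  then show ?thesis unfolding E_def
    by (auto simp: add_nonneg_eq_0_iff)
qed

lemma core:
  fixes q1 q2 q3 v1 v2 v3 p1 p2 p3 w1 w2 w3 :: "real \<Rightarrow> real \<times> real"
  assumes t0: "t0 \<in> {0<..1}"
    and dq: "\<forall>t\<in>{0<..1}. (q1 has_vector_derivative v1 t) (at t within {0..1})
        \<and> (q2 has_vector_derivative v2 t) (at t within {0..1})
        \<and> (q3 has_vector_derivative v3 t) (at t within {0..1})
        \<and> (v1 has_vector_derivative (force (q1 t) (q2 t) + force (q1 t) (q3 t))) (at t within {0..1})
        \<and> (v2 has_vector_derivative (force (q2 t) (q1 t) + force (q2 t) (q3 t))) (at t within {0..1})
        \<and> (v3 has_vector_derivative (force (q3 t) (q1 t) + force (q3 t) (q2 t))) (at t within {0..1})"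
    and dp: "\<forall>t\<in>{0<..1}. (p1 has_vector_derivative w1 t) (at t within {0..1})
        \<and> (p2 has_vector_derivative w2 t) (at t within {0..1})
        \<and> (p3 has_vector_derivative w3 t) (at t within {0..1})
        \<and> (w1 has_vector_derivative (force (p1 t) (p2 t) + force (p1 t) (p3 t))) (at t within {0..1})
        \<and> (w2 has_vector_derivative (force (p2 t) (p1 t) + force (p2 t) (p3 t))) (at t within {0..1})
        \<and> (w3 has_vector_derivative (force (p3 t) (p1 t) + force (p3 t) (p2 t))) (at t within {0..1})"
    and cf: "\<forall>t\<in>{0<..1}. q1 t \<noteq> q2 t \<and> q1 t \<noteq> q3 t \<and> q2 t \<noteq> q3 t"
    and deq: "\<forall>t\<in>{0<..1}. min (dist (p1 t) (p2 t)) (min (dist (p1 t) (p3 t)) (dist (p2 t) (p3 t)))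
          = min (dist (q1 t) (q2 t)) (min (dist (q1 t) (q3 t)) (dist (q2 t) (q3 t)))"
    and init: "p1 t0 = q1 t0" "p2 t0 = q2 t0" "p3 t0 = q3 t0"
              "w1 t0 = v1 t0" "w2 t0 = v2 t0" "w3 t0 = v3 t0"
  shows "\<forall>t\<in>{0<..1}. p1 t = q1 t \<and> p2 t = q2 t \<and> p3 t = q3 t"
proof
  fix t1 :: real assume t1: "t1 \<in> {0<..1}"
  define a where "a = min t0 t1"
  define b where "b = max t0 t1"
  have ab: "a \<le> b" and sub: "{a..b} \<subseteq> {0<..1}" and sub2: "{a..b} \<subseteq> {0..1}"
    using t0 t1 by (auto simp: a_def b_def)
  have t0ab: "t0 \<in> {a..b}" and t1ab: "t1 \<in> {a..b}" by (auto simp: a_def b_def)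
  have cq: "continuous_on {a..b} q1 \<and> continuous_on {a..b} q2 \<and> continuous_on {a..b} q3"
  proof -
    have "continuous (at t within {a..b}) q1 \<and> continuous (at t within {a..b}) q2 \<and> continuous (at t within {a..b}) q3"
      if "t \<in> {a..b}" for t
      using dq[rule_format, of t] that sub sub2
      by (meson continuous_within_subset has_vector_derivative_continuous subsetD)
    then show ?thesis using continuous_on_eq_continuous_within by blast
  qed
  define m where "m t = min (dist (q1 t) (q2 t)) (min (dist (q1 t) (q3 t)) (dist (q2 t) (q3 t)))" for t
  have "continuous_on {a..b} m" unfolding m_def using cq by (intro continuous_intros) auto
  then obtain s where s: "s \<in> {a..b}" and smin: "\<forall>y\<in>{a..b}. m s \<le> m y"
    using continuous_attains_inf[of "{a..b}" m] ab by auto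
  have d: "m s > 0" using cf s sub unfolding m_def by auto
  have "\<forall>t\<in>{a..b}. p1 t = q1 t \<and> p2 t = q2 t \<and> p3 t = q3 t"
  proof (rule uniq3[where ?q1.0=q1 and ?q2.0=q2 and ?q3.0=q3 and ?v1.0=v1 and ?v2.0=v2 and ?v3.0=v3
         and ?p1.0=p1 and ?p2.0=p2 and ?p3.0=p3 and ?w1.0=w1 and ?w2.0=w2 and ?w3.0=w3, OF ab t0ab d _ _ _ _ init])
    show "\<forall>t\<in>{a..b}. (q1 has_vector_derivative v1 t) (at t within {a..b})
        \<and> (q2 has_vector_derivative v2 t) (at t within {a..b})
        \<and> (q3 has_vector_derivative v3 t) (at t within {a..b})
        \<and> (v1 has_vector_derivative (force (q1 t) (q2 t) + force (q1 t) (q3 t))) (at t within {a..b})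
        \<and> (v2 has_vector_derivative (force (q2 t) (q1 t) + force (q2 t) (q3 t))) (at t within {a..b})
        \<and> (v3 has_vector_derivative (force (q3 t) (q1 t) + force (q3 t) (q2 t))) (at t within {a..b})"
      using dq sub sub2 by (meson has_vector_derivative_within_subset subsetD)
    show "\<forall>t\<in>{a..b}. (p1 has_vector_derivative w1 t) (at t within {a..b})
        \<and> (p2 has_vector_derivative w2 t) (at t within {a..b})
        \<and> (p3 has_vector_derivative w3 t) (at t within {a..b})
        \<and> (w1 has_vector_derivative (force (p1 t) (p2 t) + force (p1 t) (p3 t))) (at t within {a..b})
        \<and> (w2 has_vector_derivative (force (p2 t) (p1 t) + force (p2 t) (p3 t))) (at t within {a..b})
        \<and> (w3 has_vector_derivative (force (p3 t) (p1 t) + force (p3 t) (p2 t))) (at t within {a..b})"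
      using dp sub sub2 by (meson has_vector_derivative_within_subset subsetD)
    show "\<forall>t\<in>{a..b}. m s \<le> dist (q1 t) (q2 t) \<and> m s \<le> dist (q1 t) (q3 t) \<and> m s \<le> dist (q2 t) (q3 t)"
      using smin unfolding m_def by fastforce
    have "\<forall>t\<in>{a..b}. m s \<le> min (dist (p1 t) (p2 t)) (min (dist (p1 t) (p3 t)) (dist (p2 t) (p3 t)))"
    proof
      fix t assume t: "t \<in> {a..b}"
      then have "m s \<le> m t" using smin by blast
      moreover have "m t = min (dist (p1 t) (p2 t)) (min (dist (p1 t) (p3 t)) (dist (p2 t) (p3 t)))"
        using deq sub t unfolding m_def by auto
      ultimately show "m s \<le> min (dist (p1 t) (p2 t)) (min (dist (p1 t) (p3 t)) (dist (p2 t) (p3 t)))" by simp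
    qed
    then show "\<forall>t\<in>{a..b}. m s \<le> dist (p1 t) (p2 t) \<and> m s \<le> dist (p1 t) (p3 t) \<and> m s \<le> dist (p2 t) (p3 t)"
      by auto
  qed
  then show "p1 t1 = q1 t1 \<and> p2 t1 = q2 t1 \<and> p3 t1 = q3 t1" using t1ab by blast
qed



lemma sig_force:
  assumes lin: "linear \<sigma>" and iso: "\<And>x. norm (\<sigma> x) = norm (x::real\<times>real)"
  shows "force (\<sigma> x) (\<sigma> y) = \<sigma> (force x y)"
proof -
  have e: "\<sigma> y - \<sigma> x = \<sigma> (y - x)" by (rule linear_diff[OF lin, symmetric])
  have n: "norm (\<sigma> y - \<sigma> x) = norm (y - x)" unfolding e by (rule iso)
  show ?thesis unfolding force_def dist_norm n unfolding e by (rule linear_scale[OF lin, symmetric])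
qed

lemma sig_deriv:
  fixes \<sigma> :: "real \<times> real \<Rightarrow> real \<times> real"
  assumes lin: "linear \<sigma>" and "(f has_vector_derivative f') F"
  shows "((\<lambda>t. \<sigma> (f t)) has_vector_derivative \<sigma> f') F"
proof -
  have "bounded_linear \<sigma>" using lin by (simp add: linear_conv_bounded_linear)
  then show ?thesis by (rule bounded_linear.has_vector_derivative[OF _ assms(2)])
qed

lemma sig_dist:
  assumes lin: "linear \<sigma>" and iso: "\<And>x. norm (\<sigma> x) = norm (x::real\<times>real)"
  shows "dist (\<sigma> x) (\<sigma> y) = dist x y"
proof -
  have e: "\<sigma> x - \<sigma> y = \<sigma> (x - y)" by (rule linear_diff[OF lin, symmetric])
  show ?thesis unfolding dist_norm e by (rule iso)
qed

lemma sym_id: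
  fixes q1 q2 q3 v1 v2 v3 :: "real \<Rightarrow> real \<times> real"
  assumes lin: "linear \<sigma>" and iso: "\<And>x. norm (\<sigma> x) = norm (x::real\<times>real)"
    and t0: "t0 \<in> {0<..1}" and dq: "\<forall>t\<in>{0<..1}. (q1 has_vector_derivative v1 t) (at t within {0..1})
        \<and> (q2 has_vector_derivative v2 t) (at t within {0..1})
        \<and> (q3 has_vector_derivative v3 t) (at t within {0..1})
        \<and> (v1 has_vector_derivative (force (q1 t) (q2 t) + force (q1 t) (q3 t))) (at t within {0..1})
        \<and> (v2 has_vector_derivative (force (q2 t) (q1 t) + force (q2 t) (q3 t))) (at t within {0..1})
        \<and> (v3 has_vector_derivative (force (q3 t) (q1 t) + force (q3 t) (q2 t))) (at t within {0..1})"
    and cf: "\<forall>t\<in>{0<..1}. q1 t \<noteq> q2 t \<and> q1 t \<noteq> q3 t \<and> q2 t \<noteq> q3 t"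
    and init: "\<sigma> (q1 t0) = q1 t0" "\<sigma> (q2 t0) = q2 t0" "\<sigma> (q3 t0) = q3 t0"
              "\<sigma> (v1 t0) = v1 t0" "\<sigma> (v2 t0) = v2 t0" "\<sigma> (v3 t0) = v3 t0"
  shows "\<forall>t\<in>{0<..1}. \<sigma> (q1 t) = q1 t \<and> \<sigma> (q2 t) = q2 t \<and> \<sigma> (q3 t) = q3 t"
proof (rule core[OF t0 dq _ cf])
  show "\<forall>t\<in>{0<..1}. ((\<lambda>t. \<sigma> (q1 t)) has_vector_derivative (\<lambda>t. \<sigma> (v1 t)) t) (at t within {0..1})
        \<and> ((\<lambda>t. \<sigma> (q2 t)) has_vector_derivative (\<lambda>t. \<sigma> (v2 t)) t) (at t within {0..1})
        \<and> ((\<lambda>t. \<sigma> (q3 t)) has_vector_derivative (\<lambda>t. \<sigma> (v3 t)) t) (at t within {0..1})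
        \<and> ((\<lambda>t. \<sigma> (v1 t)) has_vector_derivative (force ((\<lambda>t. \<sigma> (q1 t)) t) ((\<lambda>t. \<sigma> (q2 t)) t) + force ((\<lambda>t. \<sigma> (q1 t)) t) ((\<lambda>t. \<sigma> (q3 t)) t))) (at t within {0..1})
        \<and> ((\<lambda>t. \<sigma> (v2 t)) has_vector_derivative (force ((\<lambda>t. \<sigma> (q2 t)) t) ((\<lambda>t. \<sigma> (q1 t)) t) + force ((\<lambda>t. \<sigma> (q2 t)) t) ((\<lambda>t. \<sigma> (q3 t)) t))) (at t within {0..1})
        \<and> ((\<lambda>t. \<sigma> (v3 t)) has_vector_derivative (force ((\<lambda>t. \<sigma> (q3 t)) t) ((\<lambda>t. \<sigma> (q1 t)) t) + force ((\<lambda>t. \<sigma> (q3 t)) t) ((\<lambda>t. \<sigma> (q2 t)) t))) (at t within {0..1})"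
  proof (intro ballI conjI)
    fix t :: real assume t: "t \<in> {0<..1}"
    note h = dq[rule_format, OF t]
    have fa: "\<And>a b c. force (\<sigma> a) (\<sigma> b) + force (\<sigma> a) (\<sigma> c) = \<sigma> (force a b + force a c)"
      by (simp add: sig_force[OF lin iso] linear_add[OF lin])
    have fb: "\<And>a b c. force (\<sigma> a) (\<sigma> b) + force (\<sigma> a) (\<sigma> c) = \<sigma> (force a c + force a b)"
      by (subst add.commute) (rule fa)
    show "((\<lambda>t. \<sigma> (q1 t)) has_vector_derivative \<sigma> (v1 t)) (at t within {0..1})"
      using h by (blast intro: sig_deriv[OF lin])
    show "((\<lambda>t. \<sigma> (q2 t)) has_vector_derivative \<sigma> (v2 t)) (at t within {0..1})"
      using h by (blast intro: sig_deriv[OF lin])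
    show "((\<lambda>t. \<sigma> (q3 t)) has_vector_derivative \<sigma> (v3 t)) (at t within {0..1})"
      using h by (blast intro: sig_deriv[OF lin])
    show "((\<lambda>t. \<sigma> (v1 t)) has_vector_derivative (force (\<sigma> (q1 t)) (\<sigma> (q2 t)) + force (\<sigma> (q1 t)) (\<sigma> (q3 t)))) (at t within {0..1})"
      unfolding fa by (rule sig_deriv[OF lin]) (use h in blast)
    show "((\<lambda>t. \<sigma> (v2 t)) has_vector_derivative (force (\<sigma> (q2 t)) (\<sigma> (q1 t)) + force (\<sigma> (q2 t)) (\<sigma> (q3 t)))) (at t within {0..1})"
      unfolding fa by (rule sig_deriv[OF lin]) (use h in blast)
    show "((\<lambda>t. \<sigma> (v3 t)) has_vector_derivative (force (\<sigma> (q3 t)) (\<sigma> (q1 t)) + force (\<sigma> (q3 t)) (\<sigma> (q2 t)))) (at t within {0..1})"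
      unfolding fa by (rule sig_deriv[OF lin]) (use h in blast)
  qed
  show "\<forall>t\<in>{0<..1}. min (dist (\<sigma> (q1 t)) (\<sigma> (q2 t))) (min (dist (\<sigma> (q1 t)) (\<sigma> (q3 t))) (dist (\<sigma> (q2 t)) (\<sigma> (q3 t))))
          = min (dist (q1 t) (q2 t)) (min (dist (q1 t) (q3 t)) (dist (q2 t) (q3 t)))" unfolding sig_dist[OF lin iso] by blast
qed (rule init)+

lemma sym_swap:
  fixes q1 q2 q3 v1 v2 v3 :: "real \<Rightarrow> real \<times> real"
  assumes lin: "linear \<sigma>" and iso: "\<And>x. norm (\<sigma> x) = norm (x::real\<times>real)"
    and t0: "t0 \<in> {0<..1}" and dq: "\<forall>t\<in>{0<..1}. (q1 has_vector_derivative v1 t) (at t within {0..1})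
        \<and> (q2 has_vector_derivative v2 t) (at t within {0..1})
        \<and> (q3 has_vector_derivative v3 t) (at t within {0..1})
        \<and> (v1 has_vector_derivative (force (q1 t) (q2 t) + force (q1 t) (q3 t))) (at t within {0..1})
        \<and> (v2 has_vector_derivative (force (q2 t) (q1 t) + force (q2 t) (q3 t))) (at t within {0..1})
        \<and> (v3 has_vector_derivative (force (q3 t) (q1 t) + force (q3 t) (q2 t))) (at t within {0..1})"
    and cf: "\<forall>t\<in>{0<..1}. q1 t \<noteq> q2 t \<and> q1 t \<noteq> q3 t \<and> q2 t \<noteq> q3 t"
    and init: "\<sigma> (q2 t0) = q1 t0" "\<sigma> (q1 t0) = q2 t0" "\<sigma> (q3 t0) = q3 t0"
              "\<sigma> (v2 t0) = v1 t0" "\<sigma> (v1 t0) = v2 t0" "\<sigma> (v3 t0) = v3 t0"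
  shows "\<forall>t\<in>{0<..1}. \<sigma> (q2 t) = q1 t \<and> \<sigma> (q1 t) = q2 t \<and> \<sigma> (q3 t) = q3 t"
proof (rule core[OF t0 dq _ cf])
  show "\<forall>t\<in>{0<..1}. ((\<lambda>t. \<sigma> (q2 t)) has_vector_derivative (\<lambda>t. \<sigma> (v2 t)) t) (at t within {0..1})
        \<and> ((\<lambda>t. \<sigma> (q1 t)) has_vector_derivative (\<lambda>t. \<sigma> (v1 t)) t) (at t within {0..1})
        \<and> ((\<lambda>t. \<sigma> (q3 t)) has_vector_derivative (\<lambda>t. \<sigma> (v3 t)) t) (at t within {0..1})
        \<and> ((\<lambda>t. \<sigma> (v2 t)) has_vector_derivative (force ((\<lambda>t. \<sigma> (q2 t)) t) ((\<lambda>t. \<sigma> (q1 t)) t) + force ((\<lambda>t. \<sigma> (q2 t)) t) ((\<lambda>t. \<sigma> (q3 t)) t))) (at t within {0..1})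
        \<and> ((\<lambda>t. \<sigma> (v1 t)) has_vector_derivative (force ((\<lambda>t. \<sigma> (q1 t)) t) ((\<lambda>t. \<sigma> (q2 t)) t) + force ((\<lambda>t. \<sigma> (q1 t)) t) ((\<lambda>t. \<sigma> (q3 t)) t))) (at t within {0..1})
        \<and> ((\<lambda>t. \<sigma> (v3 t)) has_vector_derivative (force ((\<lambda>t. \<sigma> (q3 t)) t) ((\<lambda>t. \<sigma> (q2 t)) t) + force ((\<lambda>t. \<sigma> (q3 t)) t) ((\<lambda>t. \<sigma> (q1 t)) t))) (at t within {0..1})"
  proof (intro ballI conjI)
    fix t :: real assume t: "t \<in> {0<..1}"
    note h = dq[rule_format, OF t]
    have fa: "\<And>a b c. force (\<sigma> a) (\<sigma> b) + force (\<sigma> a) (\<sigma> c) = \<sigma> (force a b + force a c)"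
      by (simp add: sig_force[OF lin iso] linear_add[OF lin])
    have fb: "\<And>a b c. force (\<sigma> a) (\<sigma> b) + force (\<sigma> a) (\<sigma> c) = \<sigma> (force a c + force a b)"
      by (subst add.commute) (rule fa)
    show "((\<lambda>t. \<sigma> (q1 t)) has_vector_derivative \<sigma> (v1 t)) (at t within {0..1})"
      using h by (blast intro: sig_deriv[OF lin])
    show "((\<lambda>t. \<sigma> (q2 t)) has_vector_derivative \<sigma> (v2 t)) (at t within {0..1})"
      using h by (blast intro: sig_deriv[OF lin])
    show "((\<lambda>t. \<sigma> (q3 t)) has_vector_derivative \<sigma> (v3 t)) (at t within {0..1})"
      using h by (blast intro: sig_deriv[OF lin])
    show "((\<lambda>t. \<sigma> (v1 t)) has_vector_derivative (force (\<sigma> (q1 t)) (\<sigma> (q2 t)) + force (\<sigma> (q1 t)) (\<sigma> (q3 t)))) (at t within {0..1})"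
      unfolding fa by (rule sig_deriv[OF lin]) (use h in blast)
    show "((\<lambda>t. \<sigma> (v2 t)) has_vector_derivative (force (\<sigma> (q2 t)) (\<sigma> (q1 t)) + force (\<sigma> (q2 t)) (\<sigma> (q3 t)))) (at t within {0..1})"
      unfolding fa by (rule sig_deriv[OF lin]) (use h in blast)
    show "((\<lambda>t. \<sigma> (v3 t)) has_vector_derivative (force (\<sigma> (q3 t)) (\<sigma> (q2 t)) + force (\<sigma> (q3 t)) (\<sigma> (q1 t)))) (at t within {0..1})"
      unfolding fb by (rule sig_deriv[OF lin]) (use h in blast)
  qed
  show "\<forall>t\<in>{0<..1}. min (dist (\<sigma> (q2 t)) (\<sigma> (q1 t))) (min (dist (\<sigma> (q2 t)) (\<sigma> (q3 t))) (dist (\<sigma> (q1 t)) (\<sigma> (q3 t))))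
          = min (dist (q1 t) (q2 t)) (min (dist (q1 t) (q3 t)) (dist (q2 t) (q3 t)))"
  proof (intro ballI)
    fix t :: real
    show "min (dist (\<sigma> (q2 t)) (\<sigma> (q1 t))) (min (dist (\<sigma> (q2 t)) (\<sigma> (q3 t))) (dist (\<sigma> (q1 t)) (\<sigma> (q3 t))))
          = min (dist (q1 t) (q2 t)) (min (dist (q1 t) (q3 t)) (dist (q2 t) (q3 t)))"
      unfolding sig_dist[OF lin iso] dist_commute[of "q2 t" "q1 t"] min.commute[of "dist (q2 t) (q3 t)"] ..
  qed
qed (rule init)+




lemma lin_sx: "linear (\<lambda>p::real\<times>real. (fst p, - snd p))"
  by (rule linearI) (auto simp: prod_eq_iff)
lemma iso_sx: "norm ((\<lambda>p::real\<times>real. (fst p, - snd p)) x) = norm x"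
  by (cases x) (simp add: norm_Pair)
lemma lin_sy: "linear (\<lambda>p::real\<times>real. (- fst p, snd p))"
  by (rule linearI) (auto simp: prod_eq_iff)
lemma iso_sy: "norm ((\<lambda>p::real\<times>real. (- fst p, snd p)) x) = norm x"
  by (cases x) (simp add: norm_Pair)

theorem proposition5p5:
  fixes q1 q2 q3 v1 v2 v3 :: "real \<Rightarrow> real \<times> real"
  assumes minimizer: "action_minimizer q1 q2 q3"
    and collision_free: "\<forall>t\<in>{0<..1}. q1 t \<noteq> q2 t \<and> q1 t \<noteq> q3 t \<and> q2 t \<noteq> q3 t"
    and vel1: "\<forall>t\<in>{0<..1}. (q1 has_vector_derivative v1 t) (at t within {0..1})"
    and vel2: "\<forall>t\<in>{0<..1}. (q2 has_vector_derivative v2 t) (at t within {0..1})"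
    and vel3: "\<forall>t\<in>{0<..1}. (q3 has_vector_derivative v3 t) (at t within {0..1})"
    and newton1: "\<forall>t\<in>{0<..1}. (v1 has_vector_derivative
                      (force (q1 t) (q2 t) + force (q1 t) (q3 t))) (at t within {0..1})"
    and newton2: "\<forall>t\<in>{0<..1}. (v2 has_vector_derivative
                      (force (q2 t) (q1 t) + force (q2 t) (q3 t))) (at t within {0..1})"
    and newton3: "\<forall>t\<in>{0<..1}. (v3 has_vector_derivative
                      (force (q3 t) (q1 t) + force (q3 t) (q2 t))) (at t within {0..1})"
    and t0: "t0 \<in> {0<..1}"
    and tan1: "tangent_to_axis ax1 (\<lambda>t. jacobiZ1 (q1 t) (q2 t)) t0"
    and tan2: "tangent_to_axis ax2 (\<lambda>t. jacobiZ2 (q1 t) (q2 t) (q3 t)) t0"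
  shows "\<forall>t\<in>{0<..1}. on_axis ax1 (jacobiZ1 (q1 t) (q2 t))
                    \<and> on_axis ax2 (jacobiZ2 (q1 t) (q2 t) (q3 t))"
proof -
  have sum0: "\<forall>t\<in>{0..1}. q1 t + q2 t + q3 t = 0"
    using minimizer unfolding action_minimizer_def admissible_def by blast
  have dq: "\<forall>t\<in>{0<..1}. (q1 has_vector_derivative v1 t) (at t within {0..1})
        \<and> (q2 has_vector_derivative v2 t) (at t within {0..1})
        \<and> (q3 has_vector_derivative v3 t) (at t within {0..1})
        \<and> (v1 has_vector_derivative (force (q1 t) (q2 t) + force (q1 t) (q3 t))) (at t within {0..1})
        \<and> (v2 has_vector_derivative (force (q2 t) (q1 t) + force (q2 t) (q3 t))) (at t within {0..1})
        \<and> (v3 has_vector_derivative (force (q3 t) (q1 t) + force (q3 t) (q2 t))) (at t within {0..1})"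
    using vel1 vel2 vel3 newton1 newton2 newton3 by blast
  have t0': "t0 \<in> {0..1}" using t0 by auto
  have hv1: "(q1 has_vector_derivative v1 t0) (at t0 within {0..1})" using vel1 t0 by blast
  have hv2: "(q2 has_vector_derivative v2 t0) (at t0 within {0..1})" using vel2 t0 by blast
  have hv3: "(q3 has_vector_derivative v3 t0) (at t0 within {0..1})" using vel3 t0 by blast
  have dZ1: "((\<lambda>t. jacobiZ1 (q1 t) (q2 t)) has_vector_derivative v1 t0 - v2 t0) (at t0 within {0..1})"
    unfolding jacobiZ1_def by (intro has_vector_derivative_diff hv1 hv2)
  have VZ1: "vector_derivative (\<lambda>t. jacobiZ1 (q1 t) (q2 t)) (at t0 within {0..1}) = v1 t0 - v2 t0"
    by (rule vector_derivative_within_closed_interval[OF _ t0' dZ1]) simp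
  have dZ2: "((\<lambda>t. jacobiZ2 (q1 t) (q2 t) (q3 t)) has_vector_derivative v3 t0 - (1/2) *\<^sub>R (v1 t0 + v2 t0)) (at t0 within {0..1})"
    unfolding jacobiZ2_def
    by (intro has_vector_derivative_diff has_vector_derivative_add hv1 hv2 hv3
          bounded_linear.has_vector_derivative[OF bounded_linear_scaleR_right])
  have VZ2: "vector_derivative (\<lambda>t. jacobiZ2 (q1 t) (q2 t) (q3 t)) (at t0 within {0..1}) = v3 t0 - (1/2) *\<^sub>R (v1 t0 + v2 t0)"
    by (rule vector_derivative_within_closed_interval[OF _ t0' dZ2]) simp
  have "((\<lambda>t. q1 t + q2 t + q3 t) has_vector_derivative v1 t0 + v2 t0 + v3 t0) (at t0 within {0..1})"
    by (intro has_vector_derivative_add hv1 hv2 hv3)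
  then have "((\<lambda>t. 0) has_vector_derivative v1 t0 + v2 t0 + v3 t0) (at t0 within {0..1})"
    by (rule has_vector_derivative_transform_within[where d=1]) (use sum0 t0' in auto)
  then have "vector_derivative (\<lambda>t. 0::real\<times>real) (at t0 within {0..1}) = v1 t0 + v2 t0 + v3 t0"
    using vector_derivative_within_closed_interval[OF _ t0'] by simp
  moreover have "vector_derivative (\<lambda>t. 0::real\<times>real) (at t0 within {0..1}) = 0"
    using vector_derivative_within_closed_interval[OF _ t0', of "\<lambda>t. 0::real\<times>real" 0] by simp
  ultimately have vs: "v1 t0 + v2 t0 + v3 t0 = 0" by simp
  have qs: "q1 t0 + q2 t0 + q3 t0 = 0" using sum0 t0' by blast
  have T1: "on_axis ax1 (q1 t0 - q2 t0)" "on_axis ax1 (v1 t0 - v2 t0)"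
    using tan1 unfolding tangent_to_axis_def VZ1 by (auto simp: jacobiZ1_def)
  have T2: "on_axis ax2 (q3 t0 - (1/2) *\<^sub>R (q1 t0 + q2 t0))" "on_axis ax2 (v3 t0 - (1/2) *\<^sub>R (v1 t0 + v2 t0))"
    using tan2 unfolding tangent_to_axis_def VZ2 by (auto simp: jacobiZ2_def)
  have qsc: "fst (q1 t0) + fst (q2 t0) + fst (q3 t0) = 0" "snd (q1 t0) + snd (q2 t0) + snd (q3 t0) = 0"
    using qs by (simp_all add: prod_eq_iff)
  have vsc: "fst (v1 t0) + fst (v2 t0) + fst (v3 t0) = 0" "snd (v1 t0) + snd (v2 t0) + snd (v3 t0) = 0"
    using vs by (simp_all add: prod_eq_iff)
  show ?thesis
  proof (cases ax1; cases ax2)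
    assume a1: ax1 and a2: ax2
    have c: "snd (q1 t0) = 0" "snd (q2 t0) = 0" "snd (q3 t0) = 0"
            "snd (v1 t0) = 0" "snd (v2 t0) = 0" "snd (v3 t0) = 0"
      using T1 T2 qsc vsc a1 a2 by (auto simp: on_axis_def)
    have r: "\<forall>t\<in>{0<..1}. (fst (q1 t), - snd (q1 t)) = q1 t \<and> (fst (q2 t), - snd (q2 t)) = q2 t \<and> (fst (q3 t), - snd (q3 t)) = q3 t"
      by (rule sym_id[OF lin_sx iso_sx t0 dq collision_free]) (use c in \<open>simp_all add: prod_eq_iff\<close>)
    note r' = r[unfolded prod_eq_iff fst_conv snd_conv]
    show ?thesis
    proof (intro ballI)
      fix t :: real assume t: "t \<in> {0<..1}"
      note e = r'[rule_format, OF t]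
      show "on_axis ax1 (jacobiZ1 (q1 t) (q2 t)) \<and> on_axis ax2 (jacobiZ2 (q1 t) (q2 t) (q3 t))"
        unfolding on_axis_def jacobiZ1_def jacobiZ2_def using a1 a2 by simp (use e in linarith)
    qed
  next
    assume a1: ax1 and a2: "\<not> ax2"
    have c: "snd (q1 t0) = snd (q2 t0)" "fst (q1 t0) = - fst (q2 t0)" "fst (q3 t0) = 0"
            "snd (v1 t0) = snd (v2 t0)" "fst (v1 t0) = - fst (v2 t0)" "fst (v3 t0) = 0"
      using T1 T2 qsc vsc a1 a2 by (auto simp: on_axis_def)
    have r: "\<forall>t\<in>{0<..1}. (- fst (q2 t), snd (q2 t)) = q1 t \<and> (- fst (q1 t), snd (q1 t)) = q2 t \<and> (- fst (q3 t), snd (q3 t)) = q3 t"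
      by (rule sym_swap[OF lin_sy iso_sy t0 dq collision_free]) (use c in \<open>simp_all add: prod_eq_iff\<close>)
    note r' = r[unfolded prod_eq_iff fst_conv snd_conv]
    show ?thesis
    proof (intro ballI)
      fix t :: real assume t: "t \<in> {0<..1}"
      note e = r'[rule_format, OF t]
      show "on_axis ax1 (jacobiZ1 (q1 t) (q2 t)) \<and> on_axis ax2 (jacobiZ2 (q1 t) (q2 t) (q3 t))"
        unfolding on_axis_def jacobiZ1_def jacobiZ2_def using a1 a2 by simp (use e in linarith)
    qed
  next
    assume a1: "\<not> ax1" and a2: ax2
    have c: "fst (q1 t0) = fst (q2 t0)" "snd (q1 t0) = - snd (q2 t0)" "snd (q3 t0) = 0"
            "fst (v1 t0) = fst (v2 t0)" "snd (v1 t0) = - snd (v2 t0)" "snd (v3 t0) = 0"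
      using T1 T2 qsc vsc a1 a2 by (auto simp: on_axis_def)
    have r: "\<forall>t\<in>{0<..1}. (fst (q2 t), - snd (q2 t)) = q1 t \<and> (fst (q1 t), - snd (q1 t)) = q2 t \<and> (fst (q3 t), - snd (q3 t)) = q3 t"
      by (rule sym_swap[OF lin_sx iso_sx t0 dq collision_free]) (use c in \<open>simp_all add: prod_eq_iff\<close>)
    note r' = r[unfolded prod_eq_iff fst_conv snd_conv]
    show ?thesis
    proof (intro ballI)
      fix t :: real assume t: "t \<in> {0<..1}"
      note e = r'[rule_format, OF t]
      show "on_axis ax1 (jacobiZ1 (q1 t) (q2 t)) \<and> on_axis ax2 (jacobiZ2 (q1 t) (q2 t) (q3 t))"
        unfolding on_axis_def jacobiZ1_def jacobiZ2_def using a1 a2 by simp (use e in linarith)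
    qed
  next
    assume a1: "\<not> ax1" and a2: "\<not> ax2"
    have c: "fst (q1 t0) = 0" "fst (q2 t0) = 0" "fst (q3 t0) = 0"
            "fst (v1 t0) = 0" "fst (v2 t0) = 0" "fst (v3 t0) = 0"
      using T1 T2 qsc vsc a1 a2 by (auto simp: on_axis_def)
    have r: "\<forall>t\<in>{0<..1}. (- fst (q1 t), snd (q1 t)) = q1 t \<and> (- fst (q2 t), snd (q2 t)) = q2 t \<and> (- fst (q3 t), snd (q3 t)) = q3 t"
      by (rule sym_id[OF lin_sy iso_sy t0 dq collision_free]) (use c in \<open>simp_all add: prod_eq_iff\<close>)
    note r' = r[unfolded prod_eq_iff fst_conv snd_conv]
    show ?thesis
    proof (intro ballI)
      fix t :: real assume t: "t \<in> {0<..1}"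
      note e = r'[rule_format, OF t]
      show "on_axis ax1 (jacobiZ1 (q1 t) (q2 t)) \<and> on_axis ax2 (jacobiZ2 (q1 t) (q2 t) (q3 t))"
        unfolding on_axis_def jacobiZ1_def jacobiZ2_def using a1 a2 by simp (use e in linarith)
    qed
  qed
qed


end
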